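(* Let $c>1$ be an irrational number, and for a positive integer $m$ let $x=[cm]$. Then, as $m\to\infty$, $$\int_1^x \frac{[c^{-1}([t]+1)]}{t^2}\,dt = \frac{1}{c}(\log m + \log c + \gamma) -\sum_{n=1}^\infty \frac{\{c^{-1}(n+1)\}}{n(n+1)} + O\left(\frac{1}{m}\right),$$ where $\gamma$ is Euler's constant.
   Context: $[x]$ is the greatest integer not exceeding $x$ and $\{x\}=x-[x]$. *)

theory Defs
  imports "HOL-Analysis.Analysis" "HOL-Library.Landau_Symbols"
begin

end

theory Submission imports Defs begin

lemma piece:
  fixes c :: real and k :: nat
  shows "((\<lambda>t. real_of_int \<lfloor>(real_of_int \<lfloor>t\<rfloor> + 1) / c\<rfloor> / t\<^sup>2) has_integral
          real_of_int \<lfloor>(real (Suc k) + 1) / c\<rfloor> / (real (Suc k) * (real (Suc k) + 1)))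
          {real (Suc k) .. real (Suc k) + 1}"
proof -
  define A where "A = real_of_int \<lfloor>(real (Suc k) + 1) / c\<rfloor>"
  have ftc: "((\<lambda>t. A / t\<^sup>2) has_integral ((\<lambda>t. - A / t) (real (Suc k) + 1) - (\<lambda>t. - A / t) (real (Suc k))))
          {real (Suc k) .. real (Suc k) + 1}"
  proof (rule fundamental_theorem_of_calculus)
    fix x assume "x \<in> {real (Suc k) .. real (Suc k) + 1}"
    then have "x > 0" by auto
    then show "((\<lambda>t. - A / t) has_vector_derivative A / x\<^sup>2) (at x within {real (Suc k)..real (Suc k) + 1})"
      by (auto intro!: derivative_eq_intros simp: has_real_derivative_iff_has_vector_derivative[symmetric] power2_eq_square field_simps)
  qed simp
  have eq: "(\<lambda>t. - A / t) (real (Suc k) + 1) - (\<lambda>t. - A / t) (real (Suc k)) = A / (real (Suc k) * (real (Suc k) + 1))"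
    by (simp add: field_simps)
  show ?thesis
  proof (rule has_integral_spike_finite[of "{real (Suc k) + 1}"])
    show "((\<lambda>t. A / t\<^sup>2) has_integral real_of_int \<lfloor>(real (Suc k) + 1) / c\<rfloor> / (real (Suc k) * (real (Suc k) + 1)))
          {real (Suc k) .. real (Suc k) + 1}" using ftc eq A_def by simp
    fix x assume x: "x \<in> {real (Suc k)..real (Suc k) + 1} - {real (Suc k) + 1}"
    then have "\<lfloor>x\<rfloor> = int (Suc k)" by (subst floor_eq_iff) auto
    then show "real_of_int \<lfloor>(real_of_int \<lfloor>x\<rfloor> + 1) / c\<rfloor> / x\<^sup>2 = A / x\<^sup>2"
      by (simp add: A_def)
  qed simp
qed

lemma integral_sum:
  fixes c :: real and N :: nat
  shows "((\<lambda>t. real_of_int \<lfloor>(real_of_int \<lfloor>t\<rfloor> + 1) / c\<rfloor> / t\<^sup>2) has_integral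
          (\<Sum>n<N. real_of_int \<lfloor>(real (Suc n) + 1) / c\<rfloor> / (real (Suc n) * (real (Suc n) + 1))))
          {1 .. real (Suc N)}"
proof (induction N)
  case 0
  then show ?case using has_integral_refl(1)[of _ "1::real"] by simp
next
  case (Suc N)
  have "real (Suc (Suc N)) = real (Suc N) + 1" by simp
  then show ?case
    using has_integral_combine[OF _ _ Suc.IH piece[of c N]]
    by (simp add: add.commute)
qed

lemma tail_bound:
  fixes c :: real and K :: nat
  defines "b \<equiv> \<lambda>n. frac ((real (Suc n) + 1) / c) / (real (Suc n) * (real (Suc n) + 1))"
  shows "summable b" and "0 \<le> (\<Sum>n. b (n + K))" and "(\<Sum>n. b (n + K)) \<le> 1 / real (Suc K)"
proof -
  define g where "g = (\<lambda>n. 1 / real (Suc n) - 1 / real (Suc (Suc n)))"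
  have gb: "0 \<le> b n \<and> b n \<le> g n" for n
  proof -
    have "g n = 1 / (real (Suc n) * (real (Suc n) + 1))" by (simp add: g_def field_simps)
    moreover have "frac ((real (Suc n) + 1) / c) \<le> 1" using frac_lt_1 less_imp_le by blast
    ultimately show ?thesis unfolding b_def
      by (auto intro!: divide_right_mono)
  qed
  have lim: "(\<lambda>n. 1 / real (n + Suc K)) \<longlonglongrightarrow> 0"
    using LIMSEQ_ignore_initial_segment[OF lim_inverse_n', of "Suc K"] by simp
  have gs: "(\<lambda>n. g (n + K)) sums (1 / real (Suc K))"
    using telescope_sums'[OF lim] by (simp add: g_def)
  have gs0: "g sums 1"
    using telescope_sums'[OF LIMSEQ_ignore_initial_segment[OF lim_inverse_n', of 1]] by (simp add: g_def)
  show sb: "summable b"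
    by (rule summable_comparison_test'[OF sums_summable[OF gs0], of 0]) (use gb in auto)
  have sbK: "summable (\<lambda>n. b (n + K))" using sb by (simp add: summable_iff_shift)
  show "0 \<le> (\<Sum>n. b (n + K))" using gb sbK by (intro suminf_nonneg) auto
  show "(\<Sum>n. b (n + K)) \<le> 1 / real (Suc K)"
    using suminf_le[OF _ sbK sums_summable[OF gs]] gb sums_unique[OF gs] by force
qed

theorem lemma9:
  fixes c :: real
  assumes "c > 1" and "c \<notin> \<rat>"
  shows "(\<lambda>m::nat.
            integral {1 .. real_of_int \<lfloor>c * real m\<rfloor>}
              (\<lambda>t. real_of_int \<lfloor>(real_of_int \<lfloor>t\<rfloor> + 1) / c\<rfloor> / t\<^sup>2)
          - ((1 / c) * (ln (real m) + ln c + euler_mascheroni)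
             - (\<Sum>n. frac ((real (Suc n) + 1) / c) / (real (Suc n) * (real (Suc n) + 1)))))
         \<in> O(\<lambda>m. 1 / real m)"
proof -
  define b where "b = (\<lambda>n. frac ((real (Suc n) + 1) / c) / (real (Suc n) * (real (Suc n) + 1)))"
  have sb: "summable b" using tail_bound(1)[where c=c] by (simp add: b_def)
  obtain M0 :: nat where M0: "2 / (c - 1) + 1 \<le> real M0" using real_arch_simple by blast
  have ev: "eventually (\<lambda>m::nat. m \<ge> M0) at_top" by (rule eventually_ge_at_top)
  show ?thesis
  proof (rule bigoI[where c = 3], rule eventually_mono[OF ev])
    fix m :: nat assume mM: "M0 \<le> m"
    have c1: "c - 1 > 0" using assms by simp
    have "2 / (c - 1) + 1 \<le> real m" using M0 mM by linarith
    moreover have "2 / (c - 1) \<ge> 0" using c1 by simp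
    ultimately have m1: "real m \<ge> 1" and "2 / (c - 1) \<le> real m" by linarith+
    hence "2 \<le> (c - 1) * real m" using c1 by (simp add: field_simps)
    hence cm: "c * real m \<ge> real m + 2" by (simp add: algebra_simps)
    define X where "X = \<lfloor>c * real m\<rfloor>"
    have X1: "real_of_int X > c * real m - 1" "real_of_int X \<le> c * real m"
      unfolding X_def by linarith+
    define N where "N = nat X - 1"
    have XN: "real_of_int X = real (Suc N)" using X1 cm m1 unfolding N_def by linarith
    have Nm: "real N \<ge> real m" using XN X1 cm by linarith
    hence N1: "N \<ge> 1" using m1 by linarith
    have mpos: "real m > 0" using m1 by linarith
    have I: "integral {1 .. real_of_int X} (\<lambda>t. real_of_int \<lfloor>(real_of_int \<lfloor>t\<rfloor> + 1) / c\<rfloor> / t\<^sup>2)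
        = (\<Sum>n<N. real_of_int \<lfloor>(real (Suc n) + 1) / c\<rfloor> / (real (Suc n) * (real (Suc n) + 1)))"
      unfolding XN by (rule integral_unique[OF integral_sum])
    have term_eq: "real_of_int \<lfloor>(real (Suc n) + 1) / c\<rfloor> / (real (Suc n) * (real (Suc n) + 1))
        = (1 / c) * inverse (real (Suc n)) - b n" for n
    proof -
      have "real_of_int \<lfloor>(real (Suc n) + 1) / c\<rfloor> = (real (Suc n) + 1) / c - frac ((real (Suc n) + 1) / c)"
        by (simp add: frac_def)
      moreover have "\<And>k f. k > 0 \<Longrightarrow> ((k + 1) / c - f) / (k * (k + 1)) = (1 / c) * inverse k - f / (k * (k + 1))"
      proof -
        fix k f :: real assume k: "k > 0"
        have "((k + 1) / c - f) / (k * (k + 1)) = ((k + 1) / c) / (k * (k + 1)) - f / (k * (k + 1))"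
          by (rule diff_divide_distrib)
        also have "((k + 1) / c) / (k * (k + 1)) = (1 / c) * inverse k" using k assms(1)
          by (simp add: divide_divide_eq_left inverse_eq_divide mult.commute)
        finally show "((k + 1) / c - f) / (k * (k + 1)) = (1 / c) * inverse k - f / (k * (k + 1))" .
      qed
      ultimately show ?thesis unfolding b_def by (metis of_nat_0_less_iff zero_less_Suc)
    qed
    have I2: "integral {1 .. real_of_int X} (\<lambda>t. real_of_int \<lfloor>(real_of_int \<lfloor>t\<rfloor> + 1) / c\<rfloor> / t\<^sup>2)
        = (1 / c) * harm N - (\<Sum>n<N. b n)"
      unfolding I term_eq by (simp add: sum_subtractf sum_distrib_left harm_altdef)
    define T where "T = (\<Sum>n. b (n + N))"
    have T: "0 \<le> T" "T \<le> 1 / real (Suc N)"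
      using tail_bound(2,3)[where c=c and K=N] unfolding T_def b_def by simp_all
    have S: "(\<Sum>n. b n) = T + (\<Sum>n<N. b n)"
      unfolding T_def by (rule suminf_split_initial_segment[OF sb])
    have lnm: "ln (real m) + ln c = ln (c * real m)" using mpos assms(1) by (simp add: ln_mult)
    have E: "integral {1 .. real_of_int X} (\<lambda>t. real_of_int \<lfloor>(real_of_int \<lfloor>t\<rfloor> + 1) / c\<rfloor> / t\<^sup>2)
          - ((1 / c) * (ln (real m) + ln c + euler_mascheroni) - (\<Sum>n. b n))
        = (1 / c) * (harm N - ln (real (Suc N)) - euler_mascheroni)
          + (1 / c) * (ln (real (Suc N)) - ln (c * real m)) + T"
      unfolding I2 S lnm by (simp add: algebra_simps)
    have eb: "euler_mascheroni \<in> {harm N - ln (real (Suc N)) + inverse (real (2 * (N + 1)))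
              .. harm N - ln (real (Suc N)) + inverse (real (2 * N))}"
      using euler_mascheroni_bounds[OF N1] by simp
    have "inverse (real (2 * N)) \<le> 1 / real m"
      using Nm mpos by (simp add: field_simps)
    moreover have "inverse (real (2 * (N + 1))) \<ge> 0" by simp
    ultimately have h1: "\<bar>harm N - ln (real (Suc N)) - euler_mascheroni\<bar> \<le> 1 / real m"
      using eb unfolding atLeastAtMost_iff by linarith
    have SNpos: "real (Suc N) > 0" by simp
    have l0: "ln (real (Suc N)) \<le> ln (c * real m)"
      using XN X1 SNpos by (subst ln_le_cancel_iff) auto
    have "ln (c * real m) - ln (real (Suc N)) = ln (c * real m / real (Suc N))"
      using mpos assms(1) by (simp add: ln_div)
    also have "\<dots> \<le> c * real m / real (Suc N) - 1"
      using mpos assms(1) by (intro ln_le_minus_one) simp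
    also have "\<dots> = (c * real m - real (Suc N)) / real (Suc N)"
      using SNpos by (simp add: diff_divide_distrib)
    also have "\<dots> \<le> 1 / real (Suc N)"
      using XN X1 SNpos by (intro divide_right_mono) linarith+
    also have "\<dots> \<le> 1 / real m" using Nm mpos by (simp add: field_simps)
    finally have h2: "\<bar>ln (real (Suc N)) - ln (c * real m)\<bar> \<le> 1 / real m" using l0 by linarith
    have "1 / real (Suc N) \<le> 1 / real m" using Nm mpos by (simp add: field_simps)
    hence h3: "\<bar>T\<bar> \<le> 1 / real m" using T by linarith
    have ic: "0 < 1 / c" "1 / c \<le> 1" using assms(1) by auto
    have "\<bar>(1 / c) * (harm N - ln (real (Suc N)) - euler_mascheroni)\<bar> \<le> 1 / real m"
      using h1 ic mult_left_le_one_le[of "\<bar>harm N - ln (real (Suc N)) - euler_mascheroni\<bar>" "1 / c"]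
      unfolding abs_mult by simp
    moreover have "\<bar>(1 / c) * (ln (real (Suc N)) - ln (c * real m))\<bar> \<le> 1 / real m"
      using h2 ic mult_left_le_one_le[of "\<bar>ln (real (Suc N)) - ln (c * real m)\<bar>" "1 / c"]
      unfolding abs_mult by simp
    ultimately have "\<bar>integral {1 .. real_of_int X} (\<lambda>t. real_of_int \<lfloor>(real_of_int \<lfloor>t\<rfloor> + 1) / c\<rfloor> / t\<^sup>2)
          - ((1 / c) * (ln (real m) + ln c + euler_mascheroni) - (\<Sum>n. b n))\<bar> \<le> 3 * (1 / real m)"
      unfolding E using h3 by linarith
    thus "norm (integral {1 .. real_of_int \<lfloor>c * real m\<rfloor>}
              (\<lambda>t. real_of_int \<lfloor>(real_of_int \<lfloor>t\<rfloor> + 1) / c\<rfloor> / t\<^sup>2)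
          - ((1 / c) * (ln (real m) + ln c + euler_mascheroni)
             - (\<Sum>n. frac ((real (Suc n) + 1) / c) / (real (Suc n) * (real (Suc n) + 1)))))
         \<le> 3 * norm (1 / real m)"
      using mpos unfolding X_def b_def by simp
  qed
qed

end
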